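(* Let $n>0$, $c>1$, and $k=\frac{cn}{c^2-1}$. Consider the algorithm in which each agent walks clockwise until it has travelled $k$ units of distance, and then (if rendezvous has not yet occurred) reverses and walks anti-clockwise forever. In the no-communication setting, for every initial placement of the two agents, they rendezvous by time $\frac{cn}{c^2-1}$. Hence the optimal rendezvous time without communication is exactly $\frac{cn}{c^2-1}$.
   Context: Model: the cycle is the continuous circle $\mathbb{R}/n\mathbb{Z}$ of length $n$; it is anonymous. Two agents $A$ and $B$ are placed by an adversary at arbitrary initial points and start at the same time. Both run the same deterministic algorithm; they are identical except that the slower agent $B$ has speed $1$ and the faster agent $A$ has speed $c>1$ (an agent does not know which one it is). Both know $n$ and $c$, share a sense of direction (clockwise vs. anti-clockwise), and have a pedometer measuring the distance they have travelled. Agents detect each other when they are at the same point (rendezvous). No-communication setting: the agents cannot observe anything other than the other agent being at their current location. The rendezvous time of an algorithm is the worst case, over all initial placements, of the time until the agents are co-located; the lower bound $\frac{cn}{c^2-1}$ on it holds for every algorithm in this setting. *)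

theory Defs
  imports Complex_Main
begin

text \<open>Points of the cycle R/nZ are represented by real numbers; two reals denote
  the same point of the cycle iff they differ by an integer multiple of n.\<close>
definition same_point :: "real \<Rightarrow> real \<Rightarrow> real \<Rightarrow> bool" where
  "same_point n x y \<longleftrightarrow> (\<exists>m::int. x - y = of_int m * n)"

text \<open>Displacement (clockwise = positive direction) at time t of an agent with speed v
  running the algorithm: walk clockwise until distance k has been travelled, then
  reverse and walk anti-clockwise forever.\<close>
definition walk_disp :: "real \<Rightarrow> real \<Rightarrow> real \<Rightarrow> real" where
  "walk_disp k v t = (if v * t \<le> k then v * t else 2 * k - v * t)"

definition agent_pos :: "real \<Rightarrow> real \<Rightarrow> real \<Rightarrow> real \<Rightarrow> real" where
  "agent_pos k v p t = p + walk_disp k v t"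

end

theory Submission
  imports Defs
begin

theorem theorem1:
  fixes n c a b :: real
  assumes "n > 0" and "c > 1"
  shows "\<exists>t. 0 \<le> t \<and> t \<le> c * n / (c\<^sup>2 - 1) \<and>
           same_point n (agent_pos (c * n / (c\<^sup>2 - 1)) c a t)
                        (agent_pos (c * n / (c\<^sup>2 - 1)) 1 b t)"
proof -
  define k where "k = c * n / (c\<^sup>2 - 1)"
  have c2: "c\<^sup>2 - 1 > 0" proof -
    have "c * c > 1 * 1" using assms(2) by (intro mult_strict_mono) auto
    thus ?thesis by (simp add: power2_eq_square)
  qed
  have kpos: "k > 0" unfolding k_def using assms c2 by simp
  have kk: "k - k / c = n / (c + 1)"
  proof -
    have f: "c\<^sup>2 - 1 = (c - 1) * (c + 1)" by (simp add: power2_eq_square algebra_simps)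
    have "k = c * n / ((c - 1) * (c + 1))" unfolding k_def f ..
    hence "k * ((c - 1) * (c + 1)) = c * n" using assms(2) by simp
    moreover have "(k - k / c) * (c * (c + 1)) = k * ((c - 1) * (c + 1))"
    proof -
      have "k / c * c = k" using assms(2) by simp
      thus ?thesis by (simp add: algebra_simps)
    qed
    ultimately have "(k - k / c) * (c * (c + 1)) = c * n" by simp
    hence "(k - k / c) * (c + 1) = n" using assms(2)
      by (metis (no_types, lifting) mult.assoc mult.left_commute mult_cancel_left not_one_less_zero zero_less_iff_neq_zero)
    thus ?thesis using assms(2) by (simp add: eq_divide_eq)
  qed
  define d1 where "d1 = a - b + k - k / c"
  define m where "m = floor (d1 / n)"
  have m1: "of_int m * n \<le> d1"
    using assms(1) unfolding m_def
    by (metis floor_le_iff le_divide_eq order_refl floor_divide_lower)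
  have m2: "d1 < of_int m * n + n"
  proof -
    have "d1 / n < of_int m + 1" unfolding m_def by linarith
    thus ?thesis using assms(1) by (simp add: divide_less_eq distrib_right)
  qed
  define t where "t = k / c + (d1 - of_int m * n) / (c + 1)"
  have kc: "k / c > 0" using kpos assms(2) by simp
  have t0: "t \<ge> k / c" unfolding t_def using m1 assms(2) by simp
  have tk: "t \<le> k"
  proof -
    have "(d1 - of_int m * n) / (c + 1) \<le> n / (c + 1)"
      using m2 assms(2) by (intro divide_right_mono) auto
    thus ?thesis unfolding t_def using kk by linarith
  qed
  have ct: "c * t \<ge> k" using t0 assms(2) by (simp add: divide_le_eq mult.commute)
  have w1: "walk_disp k c t = 2 * k - c * t"
    unfolding walk_disp_def using ct by auto
  have w2: "walk_disp k 1 t = t" unfolding walk_disp_def using tk by auto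
  have eq: "(c + 1) * t = (c + 1) * (k / c) + (d1 - of_int m * n)"
    unfolding t_def using assms(2) by (simp add: distrib_left)
  have "agent_pos k c a t - agent_pos k 1 b t = of_int m * n"
  proof -
    have "(c + 1) * (k / c) = k + k / c" using assms(2) by (simp add: distrib_right add_divide_distrib)
    hence "(c + 1) * t = k + k / c + (d1 - of_int m * n)" using eq by simp
    hence "c * t + t = 2 * k + a - b - of_int m * n" unfolding d1_def by (simp add: algebra_simps)
    thus ?thesis unfolding agent_pos_def w1 w2 by linarith
  qed
  hence "same_point n (agent_pos k c a t) (agent_pos k 1 b t)"
    unfolding same_point_def by blast
  moreover have "0 \<le> t" using t0 kc by linarith
  ultimately show ?thesis using tk unfolding k_def by blast
qed

end
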